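(* Let $G=(V,E)$ be an undirected unweighted network with girth $g$, let $S\subseteq V$ and let $k$ be a natural number. Let $M$ be the value computed by procedure Estimate$(G,S,k)$ (described in the context). Then $g\le M$, and if $\mathcal{C}\neq\emptyset$ then $M\le 2d(S)+g$.
   Context: Vertices have distinct identifiers $ID(\cdot)$; $d(u,v)$ is the hop distance. A vertex $v$ is closer to $u$ than $w$ if $d(u,v)<d(u,w)$, or $d(u,v)=d(u,w)$ and $ID(v)<ID(w)$. For $v\in V$, $U(S,k,v)$ is the set of the $k$ vertices of $S$ closest to $v$, or $S$ itself if $|S|\le k$. A source $s\in S$ covers a cycle $C$ if $s\in U(S,k,v)$ for all $v\in V(C)$; then $d(s,C)=\min_{v\in V(C)}d(s,v)$ and, for a covered cycle, $d(S,C)=\min\{d(s,C): s\in S \text{ covers } C\}$. $\mathcal{C}$ is the set of shortest cycles of $G$ covered by some source, and when $\mathcal{C}\neq\emptyset$, $d(S)=\min\{d(S,C):C\in\mathcal{C}\}$. Procedure Estimate$(G,S,k)$: (i) partial BFS trees rooted at the sources are built so that each vertex $v$ learns $U(S,k,v)$ together with $d(s,v)$ and a BFS parent $p(s,v)$ (a neighbor of $v$ with $d(s,p(s,v))=d(s,v)-1$; undefined if $v=s$) for each $s\in U(S,k,v)$; (ii) each vertex sends this information to its neighbors; (iii) each vertex $y$ sets $M_y=\min\, (d(s,x)+d(s,y)+1)$ over all neighbors $x$ of $y$ and all $s\in U(S,k,y)\cap U(S,k,x)$ with $p(s,x)\neq y$ and $p(s,y)\neq x$ ($M_y=\infty$ if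 there are none); (iv) $M=\min_{v\in V}M_v$ is computed and made known to all vertices. The girth $g$ is $\infty$ if $G$ is acyclic. *)

theory Defs
  imports Main "HOL-Library.Extended_Nat"
begin

definition simple_graph :: "'a set \<Rightarrow> ('a \<Rightarrow> 'a \<Rightarrow> bool) \<Rightarrow> bool" where
  "simple_graph V E \<longleftrightarrow> finite V \<and> (\<forall>u v. E u v \<longrightarrow> u \<in> V \<and> v \<in> V \<and> u \<noteq> v \<and> E v u)"

definition is_walk :: "'a set \<Rightarrow> ('a \<Rightarrow> 'a \<Rightarrow> bool) \<Rightarrow> 'a list \<Rightarrow> bool" where
  "is_walk V E xs \<longleftrightarrow> xs \<noteq> [] \<and> set xs \<subseteq> V \<and> (\<forall>i. Suc i < length xs \<longrightarrow> E (xs ! i) (xs ! Suc i))"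

text \<open>Hop distance (infinite if unreachable).\<close>
definition hop_dist :: "'a set \<Rightarrow> ('a \<Rightarrow> 'a \<Rightarrow> bool) \<Rightarrow> 'a \<Rightarrow> 'a \<Rightarrow> enat" where
  "hop_dist V E u v = Inf {enat (length xs - 1) | xs. is_walk V E xs \<and> hd xs = u \<and> last xs = v}"

definition connected_graph :: "'a set \<Rightarrow> ('a \<Rightarrow> 'a \<Rightarrow> bool) \<Rightarrow> bool" where
  "connected_graph V E \<longleftrightarrow> (\<forall>u\<in>V. \<forall>v\<in>V. hop_dist V E u v < \<infinity>)"

text \<open>A cycle given as the cyclic list of its (distinct) vertices; its length is the
number of vertices (= number of edges).\<close>
definition is_cycle :: "'a set \<Rightarrow> ('a \<Rightarrow> 'a \<Rightarrow> bool) \<Rightarrow> 'a list \<Rightarrow> bool" where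
  "is_cycle V E c \<longleftrightarrow> length c \<ge> 3 \<and> distinct c \<and> set c \<subseteq> V \<and>
     (\<forall>i < length c. E (c ! i) (c ! ((i + 1) mod length c)))"

definition girth :: "'a set \<Rightarrow> ('a \<Rightarrow> 'a \<Rightarrow> bool) \<Rightarrow> enat" where
  "girth V E = Inf {enat (length c) | c. is_cycle V E c}"

definition shortest_cycle :: "'a set \<Rightarrow> ('a \<Rightarrow> 'a \<Rightarrow> bool) \<Rightarrow> 'a list \<Rightarrow> bool" where
  "shortest_cycle V E c \<longleftrightarrow> is_cycle V E c \<and> enat (length c) = girth V E"

definition closer :: "'a set \<Rightarrow> ('a \<Rightarrow> 'a \<Rightarrow> bool) \<Rightarrow> ('a \<Rightarrow> nat) \<Rightarrow> 'a \<Rightarrow> 'a \<Rightarrow> 'a \<Rightarrow> bool" where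
  "closer V E ID u v w \<longleftrightarrow> hop_dist V E u v < hop_dist V E u w \<or>
      (hop_dist V E u v = hop_dist V E u w \<and> ID v < ID w)"

text \<open>U(S,k,v): the k vertices of S closest to v (S itself if |S| <= k), i.e. those
elements of S having fewer than k elements of S strictly closer to v.\<close>
definition Ucl :: "'a set \<Rightarrow> ('a \<Rightarrow> 'a \<Rightarrow> bool) \<Rightarrow> ('a \<Rightarrow> nat) \<Rightarrow> 'a set \<Rightarrow> nat \<Rightarrow> 'a \<Rightarrow> 'a set" where
  "Ucl V E ID S k v = (if card S \<le> k then S
      else {s \<in> S. card {t \<in> S. closer V E ID v t s} < k})"

definition covers :: "'a set \<Rightarrow> ('a \<Rightarrow> 'a \<Rightarrow> bool) \<Rightarrow> ('a \<Rightarrow> nat) \<Rightarrow> 'a set \<Rightarrow> nat \<Rightarrow> 'a \<Rightarrow> 'a list \<Rightarrow> bool" where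
  "covers V E ID S k s c \<longleftrightarrow> s \<in> S \<and> (\<forall>v \<in> set c. s \<in> Ucl V E ID S k v)"

definition dist_src_cycle :: "'a set \<Rightarrow> ('a \<Rightarrow> 'a \<Rightarrow> bool) \<Rightarrow> 'a \<Rightarrow> 'a list \<Rightarrow> enat" where
  "dist_src_cycle V E s c = Inf ((\<lambda>v. hop_dist V E s v) ` set c)"

definition covered_shortest :: "'a set \<Rightarrow> ('a \<Rightarrow> 'a \<Rightarrow> bool) \<Rightarrow> ('a \<Rightarrow> nat) \<Rightarrow> 'a set \<Rightarrow> nat \<Rightarrow> 'a list set" where
  "covered_shortest V E ID S k = {c. shortest_cycle V E c \<and> (\<exists>s \<in> S. covers V E ID S k s c)}"

definition dist_S_cycle :: "'a set \<Rightarrow> ('a \<Rightarrow> 'a \<Rightarrow> bool) \<Rightarrow> ('a \<Rightarrow> nat) \<Rightarrow> 'a set \<Rightarrow> nat \<Rightarrow> 'a list \<Rightarrow> enat" where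
  "dist_S_cycle V E ID S k c = Inf {dist_src_cycle V E s c | s. s \<in> S \<and> covers V E ID S k s c}"

definition dS :: "'a set \<Rightarrow> ('a \<Rightarrow> 'a \<Rightarrow> bool) \<Rightarrow> ('a \<Rightarrow> nat) \<Rightarrow> 'a set \<Rightarrow> nat \<Rightarrow> enat" where
  "dS V E ID S k = Inf (dist_S_cycle V E ID S k ` covered_shortest V E ID S k)"

definition valid_parents :: "'a set \<Rightarrow> ('a \<Rightarrow> 'a \<Rightarrow> bool) \<Rightarrow> ('a \<Rightarrow> nat) \<Rightarrow> 'a set \<Rightarrow> nat \<Rightarrow> ('a \<Rightarrow> 'a \<Rightarrow> 'a option) \<Rightarrow> bool" where
  "valid_parents V E ID S k p \<longleftrightarrow>
     (\<forall>v \<in> V. \<forall>s \<in> Ucl V E ID S k v.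
        (v = s \<longrightarrow> p s v = None) \<and>
        (v \<noteq> s \<longrightarrow> (\<exists>w. p s v = Some w \<and> E v w \<and> hop_dist V E s w + 1 = hop_dist V E s v)))"

definition M_at :: "'a set \<Rightarrow> ('a \<Rightarrow> 'a \<Rightarrow> bool) \<Rightarrow> ('a \<Rightarrow> nat) \<Rightarrow> 'a set \<Rightarrow> nat \<Rightarrow> ('a \<Rightarrow> 'a \<Rightarrow> 'a option) \<Rightarrow> 'a \<Rightarrow> enat" where
  "M_at V E ID S k p y = Inf {hop_dist V E s x + hop_dist V E s y + 1 | x s.
      E y x \<and> s \<in> Ucl V E ID S k y \<and> s \<in> Ucl V E ID S k x \<and>
      p s x \<noteq> Some y \<and> p s y \<noteq> Some x}"

definition estimate :: "'a set \<Rightarrow> ('a \<Rightarrow> 'a \<Rightarrow> bool) \<Rightarrow> ('a \<Rightarrow> nat) \<Rightarrow> 'a set \<Rightarrow> nat \<Rightarrow> ('a \<Rightarrow> 'a \<Rightarrow> 'a option) \<Rightarrow> enat" where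
  "estimate V E ID S k p = Inf (M_at V E ID S k p ` V)"

end

theory Submission
  imports Defs
begin


lemma enat_Inf_in: "(A::enat set) \<noteq> {} \<Longrightarrow> Inf A \<in> A"
  unfolding Inf_enat_def by (auto intro: LeastI_ex)

lemma walk_succ: "is_walk V R xs \<longleftrightarrow> xs \<noteq> [] \<and> set xs \<subseteq> V \<and> successively R xs"
  unfolding is_walk_def successively_conv_nth by auto

lemma hop_le: "is_walk V E xs \<Longrightarrow> hd xs = u \<Longrightarrow> last xs = v \<Longrightarrow> hop_dist V E u v \<le> enat (length xs - 1)"
  unfolding hop_dist_def by (rule Inf_lower) blast

lemma hop_attained:
  assumes "hop_dist V E u v < \<infinity>"
  shows "\<exists>xs. is_walk V E xs \<and> hd xs = u \<and> last xs = v \<and> hop_dist V E u v = enat (length xs - 1)"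
proof -
  let ?A = "{enat (length xs - 1) | xs. is_walk V E xs \<and> hd xs = u \<and> last xs = v}"
  have "?A \<noteq> {}"
  proof
    assume "?A = {}"
    then have "hop_dist V E u v = \<infinity>" unfolding hop_dist_def by (metis Inf_empty top_enat_def)
    then show False using assms by simp
  qed
  from enat_Inf_in[OF this] show ?thesis unfolding hop_dist_def by auto
qed

lemma walk_append:
  assumes "is_walk V R xs" "is_walk V R ys" "last xs = hd ys"
  shows "is_walk V R (xs @ tl ys)" "hd (xs @ tl ys) = hd xs" "last (xs @ tl ys) = last ys"
    "length (xs @ tl ys) = length xs + length ys - 1"
proof -
  obtain y ys' where ys: "ys = y # ys'" using assms(2) unfolding is_walk_def by (cases ys) auto
  have xs: "xs \<noteq> []" using assms(1) unfolding is_walk_def by auto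
  have a: "successively R xs" "set xs \<subseteq> V" "successively R (y # ys')" "set ys' \<subseteq> V" "last xs = y"
    using assms unfolding walk_succ ys by auto
  then have "ys' = [] \<or> R y (hd ys') \<and> successively R ys'" unfolding successively_Cons by simp
  then have "successively R (xs @ ys')" using a(1,5) unfolding successively_append_iff by auto
  then show "is_walk V R (xs @ tl ys)" using a xs unfolding walk_succ ys by simp
  show "hd (xs @ tl ys) = hd xs" using xs by simp
  show "last (xs @ tl ys) = last ys" using xs assms(3) ys by auto
  show "length (xs @ tl ys) = length xs + length ys - 1" using ys by simp
qed

lemma simple_E: "simple_graph V E \<Longrightarrow> E u v \<Longrightarrow> u \<in> V \<and> v \<in> V \<and> u \<noteq> v \<and> E v u"
  unfolding simple_graph_def by blast

lemma hop_step:
  assumes "simple_graph V E" "E w w'"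
  shows "hop_dist V E u w' \<le> hop_dist V E u w + 1"
proof (cases "hop_dist V E u w < \<infinity>")
  case True
  from hop_attained[OF True] obtain xs where xs: "is_walk V E xs" "hd xs = u" "last xs = w" "hop_dist V E u w = enat (length xs - 1)"
    by blast
  have "is_walk V E [w, w']" using simple_E[OF assms] assms(2) unfolding walk_succ by simp
  moreover have "last xs = hd [w, w']" using xs(3) by simp
  ultimately have wa: "is_walk V E (xs @ [w'])" "hd (xs @ [w']) = hd xs" "last (xs @ [w']) = w'"
    using walk_append[of V E xs "[w, w']"] xs(1) by auto
  have "length xs \<ge> 1" using xs(1) unfolding is_walk_def by (cases xs) auto
  have "hop_dist V E u w' \<le> enat (length (xs @ [w']) - 1)"
    using hop_le[OF wa(1)] wa(2,3) xs(2) by blast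
  also have "enat (length (xs @ [w']) - 1) = enat (length xs - 1) + 1"
    using \<open>length xs \<ge> 1\<close> by (simp add: one_enat_def)
  finally show ?thesis using xs(4) by simp
qed simp

lemma hop_self: "u \<in> V \<Longrightarrow> hop_dist V E u u = 0"
proof -
  assume "u \<in> V"
  then have "is_walk V E [u]" unfolding is_walk_def by auto
  from hop_le[OF this] have "hop_dist V E u u \<le> enat 0" by simp
  then have "hop_dist V E u u \<le> 0" unfolding zero_enat_def .
  then show ?thesis by simp
qed

lemma hop_zero: "hop_dist V E u v = 0 \<Longrightarrow> u = v"
proof -
  assume a: "hop_dist V E u v = 0"
  then have "hop_dist V E u v < \<infinity>" by simp
  from hop_attained[OF this] obtain xs where xs: "is_walk V E xs" "hd xs = u" "last xs = v" "hop_dist V E u v = enat (length xs - 1)"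
    by blast
  then have "length xs = 1" using a unfolding is_walk_def by (cases xs) (auto simp: zero_enat_def)
  then show ?thesis using xs by (cases xs) auto
qed

lemma distinct_walk:
  "is_walk V R W \<Longrightarrow> \<exists>W'. is_walk V R W' \<and> hd W' = hd W \<and> last W' = last W \<and> distinct W' \<and> length W' \<le> length W"
proof (induction "length W" arbitrary: W rule: less_induct)
  case less
  show ?case
  proof (cases "distinct W")
    case True then show ?thesis using less.prems by blast
  next
    case False
    then obtain a b c z where W: "W = a @ [z] @ b @ [z] @ c" using not_distinct_decomp by blast
    let ?W = "a @ [z] @ c"
    have W2: "W = a @ ((z # b) @ (z # c))" using W by simp
    have s: "successively R W" "set W \<subseteq> V" using less.prems unfolding walk_succ by auto
    have t: "successively R a \<and> successively R ((z#b)@(z#c)) \<and> (a = [] \<or> R (last a) z)"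
      using s(1) W2 successively_append_iff[of R a "(z#b)@(z#c)"] by simp
    then have s1: "successively R a" "successively R (z # c)" "a = [] \<or> R (last a) z"
      using successively_append_iff[of R "z#b" "z#c"] by blast+
    have "successively R (a @ (z # c))" using s1 unfolding successively_append_iff by auto
    moreover have "set ?W \<subseteq> V" using s(2) unfolding W by auto
    ultimately have "is_walk V R ?W" unfolding walk_succ by simp
    moreover have "hd ?W = hd W" "last ?W = last W" unfolding W by (cases a; simp)+
    moreover have "length ?W < length W" unfolding W by simp
    ultimately obtain W' where "is_walk V R W'" "hd W' = hd ?W" "last W' = last ?W" "distinct W'" "length W' \<le> length ?W"
      using less.hyps[of ?W] by blast
    then show ?thesis using \<open>hd ?W = hd W\<close> \<open>last ?W = last W\<close> \<open>length ?W < length W\<close>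
      by (intro exI[of _ W']) simp
  qed
qed


lemma Ucl_sub: "Ucl V E ID S k v \<subseteq> S"
  unfolding Ucl_def by auto

lemma walk_take:
  assumes "is_walk V R P" "i < length P"
  shows "is_walk V R (take (Suc i) P)" "hd (take (Suc i) P) = hd P" "last (take (Suc i) P) = P ! i"
    "length (take (Suc i) P) = Suc i"
proof -
  have ne: "P \<noteq> []" using assms(2) by auto
  show "is_walk V R (take (Suc i) P)" using assms unfolding is_walk_def
    by (auto dest: in_set_takeD)
  show "hd (take (Suc i) P) = hd P" using ne by (cases P) auto
  show "length (take (Suc i) P) = Suc i" using assms(2) by simp
  moreover have "take (Suc i) P \<noteq> []" using assms(2) by (cases P) auto
  ultimately have "last (take (Suc i) P) = take (Suc i) P ! i" by (simp add: last_conv_nth)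
  then show "last (take (Suc i) P) = P ! i" by simp
qed

lemma walk_drop:
  assumes "is_walk V R P" "i < length P"
  shows "is_walk V R (drop i P)" "hd (drop i P) = P ! i" "last (drop i P) = last P"
    "length (drop i P) = length P - i"
proof -
  show "is_walk V R (drop i P)" using assms unfolding is_walk_def
    by (auto dest: in_set_dropD)
  show "hd (drop i P) = P ! i" using assms(2) by (simp add: hd_drop_conv_nth)
  show "last (drop i P) = last P" using assms(2) by simp
  show "length (drop i P) = length P - i" by simp
qed

lemma levels:
  assumes "is_walk V E P" "hd P = s" "hop_dist V E s (last P) = enat (length P - 1)" "i < length P"
  shows "hop_dist V E s (P ! i) = enat i"
proof (rule antisym)
  note t = walk_take[OF assms(1,4)]
  show "hop_dist V E s (P ! i) \<le> enat i" using hop_le[OF t(1)] t(2,3,4) assms(2) by simp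
  show "enat i \<le> hop_dist V E s (P ! i)"
  proof (rule ccontr)
    assume "\<not> enat i \<le> hop_dist V E s (P ! i)"
    then have lt: "hop_dist V E s (P ! i) < enat i" by simp
    then have "hop_dist V E s (P ! i) < \<infinity>" using enat_ord_simps(4) less_trans by blast
    from hop_attained[OF this] obtain Q where Q: "is_walk V E Q" "hd Q = s" "last Q = P ! i"
      "hop_dist V E s (P ! i) = enat (length Q - 1)" by blast
    note d = walk_drop[OF assms(1,4)]
    have "last Q = hd (drop i P)" using Q(3) d(2) by simp
    note wa = walk_append[OF Q(1) d(1) this]
    have lQ: "length Q - 1 < i" using lt Q(4) by simp
    have "Q \<noteq> []" using Q(1) unfolding is_walk_def by simp
    then have "length (Q @ tl (drop i P)) - 1 < length P - 1"
      using wa(4) d(4) lQ assms(4) by simp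
    moreover have "hop_dist V E s (last P) \<le> enat (length (Q @ tl (drop i P)) - 1)"
      using hop_le[OF wa(1)] wa(2,3) Q(2) d(3) by simp
    ultimately show False using assms(3) by simp
  qed
qed

definition avoid :: "('a \<Rightarrow> 'a \<Rightarrow> bool) \<Rightarrow> 'a \<Rightarrow> 'a \<Rightarrow> 'a \<Rightarrow> 'a \<Rightarrow> bool" where
  "avoid E x y a b \<longleftrightarrow> E a b \<and> \<not> ((a = x \<and> b = y) \<or> (a = y \<and> b = x))"

lemma walk_cycle:
  assumes sg: "simple_graph V E" and "E x y" and W: "is_walk V (avoid E x y) W" "hd W = x" "last W = y"
  shows "girth V E \<le> enat (length W)"
proof -
  from distinct_walk[OF W(1)] obtain C where C: "is_walk V (avoid E x y) C" "hd C = x" "last C = y"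
    "distinct C" "length C \<le> length W" using W by blast
  have xy: "x \<noteq> y" "E y x" using simple_E[OF sg assms(2)] by auto
  have ne: "C \<noteq> []" using C(1) unfolding is_walk_def by simp
  have l2: "length C \<ge> 2"
  proof (rule ccontr)
    assume "\<not> length C \<ge> 2"
    moreover have "length C \<noteq> 0" using ne by simp
    ultimately have "length C = 1" by arith
    then obtain c where "C = [c]" by (metis length_0_conv length_Suc_conv One_nat_def)
    then show False using C(2,3) xy(1) by simp
  qed
  have succ: "successively (avoid E x y) C" using C(1) unfolding walk_succ by simp
  have l3: "length C \<ge> 3"
  proof (rule ccontr)
    assume "\<not> length C \<ge> 3"
    then have "length C = 2" using l2 by simp
    then obtain a b where "C = [a, b]"
      by (metis (no_types, lifting) One_nat_def Suc_length_conv length_0_conv numeral_2_eq_2)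
    then show False using succ C(2,3) unfolding avoid_def by simp
  qed
  have "is_cycle V E C"
    unfolding is_cycle_def
  proof (intro conjI allI impI)
    show "3 \<le> length C" by (rule l3)
    show "distinct C" by (rule C(4))
    show "set C \<subseteq> V" using C(1) unfolding is_walk_def by simp
    fix i assume i: "i < length C"
    show "E (C ! i) (C ! ((i + 1) mod length C))"
    proof (cases "Suc i < length C")
      case True
      then have "avoid E x y (C ! i) (C ! Suc i)" using successively_nth[OF succ] by blast
      then show ?thesis using True unfolding avoid_def by simp
    next
      case False
      then have "i = length C - 1" using i by simp
      then have "C ! i = y" "(i + 1) mod length C = 0" "C ! 0 = x"
        using C(2,3) ne i by (auto simp: last_conv_nth hd_conv_nth)
      then show ?thesis using xy(2) by simp
    qed
  qed
  then have "girth V E \<le> enat (length C)" unfolding girth_def by (intro Inf_lower) blast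
  then show ?thesis using C(5) by (meson enat_ord_simps(1) order_trans)
qed


lemma avoid_sym: "simple_graph V E \<Longrightarrow> avoid E x y a b \<Longrightarrow> avoid E x y b a"
  unfolding avoid_def using simple_E by metis

lemma shortest_avoid:
  assumes "is_walk V E P" "hd P = s" "hop_dist V E s (last P) = enat (length P - 1)"
    and C: "\<And>i. Suc i < length P \<Longrightarrow> \<not> (hop_dist V E s x = enat i \<and> hop_dist V E s y = enat (Suc i))
       \<and> \<not> (hop_dist V E s y = enat i \<and> hop_dist V E s x = enat (Suc i))"
  shows "is_walk V (avoid E x y) P"
proof -
  have "successively (avoid E x y) P" unfolding successively_conv_nth
  proof (intro allI impI)
    fix i assume i: "Suc i < length P"
    have e: "E (P ! i) (P ! Suc i)" using assms(1) i unfolding is_walk_def by blast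
    have l1: "hop_dist V E s (P ! i) = enat i" using levels[OF assms(1,2,3)] i by simp
    have l2: "hop_dist V E s (P ! Suc i) = enat (Suc i)" using levels[OF assms(1,2,3) i] .
    show "avoid E x y (P ! i) (P ! Suc i)" unfolding avoid_def using e l1 l2 C[OF i] by auto
  qed
  then show ?thesis using assms(1) unfolding walk_succ by simp
qed

lemma shortest_len:
  assumes "is_walk V E P" "hd P = s" "hop_dist V E s (last P) = enat (length P - 1)"
  shows "length P = Suc (length P - 1)"
  using assms(1) unfolding is_walk_def by (cases P) auto

lemma part1_core:
  assumes sg: "simple_graph V E" and conn: "connected_graph V E" and s: "s \<in> V"
    and e: "E y x" and le: "hop_dist V E s x \<le> hop_dist V E s y"
    and par: "hop_dist V E s x = hop_dist V E s y \<or>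
       (\<exists>w. E y w \<and> w \<noteq> x \<and> hop_dist V E s w + 1 = hop_dist V E s y)"
  shows "girth V E \<le> hop_dist V E s x + hop_dist V E s y + 1"
proof -
  have xyV: "x \<in> V" "y \<in> V" "x \<noteq> y" "E x y" using simple_E[OF sg e] by auto
  have fx: "hop_dist V E s x < \<infinity>" using conn s xyV unfolding connected_graph_def by blast
  have fy: "hop_dist V E s y < \<infinity>" using conn s xyV unfolding connected_graph_def by blast
  from hop_attained[OF fx] obtain Px where Px: "is_walk V E Px" "hd Px = s" "last Px = x"
    "hop_dist V E s x = enat (length Px - 1)" by blast
  define a where "a = length Px - 1"
  have la: "length Px = Suc a" using Px(1) unfolding a_def is_walk_def by (cases Px) auto
  have hx: "hop_dist V E s x = enat a" using Px(4) a_def by simp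
  have Py_ex: "\<exists>Py. is_walk V (avoid E x y) Py \<and> hd Py = s \<and> last Py = y \<and>
      enat (length Py - 1) = hop_dist V E s y \<and> is_walk V (avoid E x y) Px"
  proof (cases "hop_dist V E s x = hop_dist V E s y")
    case True
    from hop_attained[OF fy] obtain Py where Py: "is_walk V E Py" "hd Py = s" "last Py = y"
      "hop_dist V E s y = enat (length Py - 1)" by blast
    have "is_walk V (avoid E x y) Py"
      by (rule shortest_avoid[OF Py(1,2)]) (use Py(3,4) True in auto)
    moreover have "is_walk V (avoid E x y) Px"
      by (rule shortest_avoid[OF Px(1,2)]) (use Px(3,4) True in auto)
    ultimately show ?thesis using Py by auto
  next
    case False
    then obtain w where w: "E y w" "w \<noteq> x" "hop_dist V E s w + 1 = hop_dist V E s y" using par by blast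
    have wV: "w \<in> V" "w \<noteq> y" "E w y" using simple_E[OF sg w(1)] by auto
    have fw: "hop_dist V E s w < \<infinity>" using conn s wV unfolding connected_graph_def by blast
    from hop_attained[OF fw] obtain Pw where Pw: "is_walk V E Pw" "hd Pw = s" "last Pw = w"
      "hop_dist V E s w = enat (length Pw - 1)" by blast
    define b where "b = length Pw - 1"
    have lb: "length Pw = Suc b" using Pw(1) unfolding b_def is_walk_def by (cases Pw) auto
    have hy: "hop_dist V E s y = enat (Suc b)" using w(3) Pw(4) b_def by (simp add: eSuc_enat[symmetric] eSuc_plus_1)
    have "hop_dist V E s y \<le> hop_dist V E s x + 1" using hop_step[OF sg xyV(4)] by simp
    then have "Suc b \<le> a + 1" using hx hy by (simp add: one_enat_def)
    moreover have "a \<le> Suc b" using le hx hy by simp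
    ultimately have ab: "a = b" using False hx hy by auto
    have Pwa: "is_walk V (avoid E x y) Pw"
      by (rule shortest_avoid[OF Pw(1,2)]) (use Pw(3,4) hx hy ab lb in auto)
    have w2: "is_walk V (avoid E x y) [w, y]" unfolding walk_succ avoid_def using w wV xyV by auto
    have w3: "last Pw = hd [w, y]" using Pw(3) by simp
    note wa2 = walk_append[OF Pwa w2 w3]
    have "is_walk V (avoid E x y) (Pw @ tl [w, y])" "hd (Pw @ tl [w, y]) = s"
      "last (Pw @ tl [w, y]) = y" "length (Pw @ tl [w, y]) - 1 = Suc b"
      using wa2 Pw(2) lb by simp_all
    moreover have "is_walk V (avoid E x y) Px"
      by (rule shortest_avoid[OF Px(1,2)]) (use Px(3,4) hx hy ab la in auto)
    ultimately show ?thesis using hy by metis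
  qed
  then obtain Py where Py: "is_walk V (avoid E x y) Py" "hd Py = s" "last Py = y"
      "enat (length Py - 1) = hop_dist V E s y" and Pxa: "is_walk V (avoid E x y) Px" by blast
  have "successively (avoid E x y) Px" using Pxa unfolding walk_succ by simp
  then have "successively (\<lambda>a b. avoid E x y b a) Px"
    by (rule successively_mono) (use avoid_sym[OF sg] in blast)
  then have rPx: "is_walk V (avoid E x y) (rev Px)" using Pxa unfolding walk_succ by simp
  have "last (rev Px) = hd Py" using Px(2) Py(2) Pxa unfolding is_walk_def by (simp add: last_rev)
  note wa = walk_append[OF rPx Py(1) this]
  have hdW: "hd (rev Px @ tl Py) = x" using wa(2) Px(3) Pxa unfolding is_walk_def by (simp add: hd_rev)
  have "girth V E \<le> enat (length (rev Px @ tl Py))"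
    using walk_cycle[OF sg xyV(4) wa(1) hdW] wa(3) Py(3) by simp
  also have "length (rev Px @ tl Py) = a + (length Py - 1) + 1"
    using wa(4) la Py(1) unfolding is_walk_def by (cases Py) auto
  finally have "girth V E \<le> enat (a + (length Py - 1) + 1)" .
  also have "enat (a + (length Py - 1) + 1) = hop_dist V E s x + hop_dist V E s y + 1"
    using hx Py(4)[symmetric] by (simp add: one_enat_def)
  finally show ?thesis .
qed


lemma par_lemma:
  assumes "valid_parents V E ID S k p" "v \<in> V" "s \<in> Ucl V E ID S k v" "v \<noteq> s" "p s v \<noteq> Some x"
  shows "\<exists>w. E v w \<and> w \<noteq> x \<and> hop_dist V E s w + 1 = hop_dist V E s v"
proof -
  have h: "(v = s \<longrightarrow> p s v = None) \<and> (v \<noteq> s \<longrightarrow> (\<exists>w. p s v = Some w \<and> E v w \<and> hop_dist V E s w + 1 = hop_dist V E s v))"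
    using bspec[OF bspec[OF assms(1)[unfolded valid_parents_def] assms(2)] assms(3)] .
  have "\<exists>w. p s v = Some w \<and> E v w \<and> hop_dist V E s w + 1 = hop_dist V E s v"
    using conjunct2[OF h] assms(4) by simp
  then obtain w where "p s v = Some w" "E v w" "hop_dist V E s w + 1 = hop_dist V E s v" by blast
  then show ?thesis using assms(5) by auto
qed

lemma part1_half:
  assumes sg: "simple_graph V E" and conn: "connected_graph V E" and SV: "S \<subseteq> V"
    and vp: "valid_parents V E ID S k p" and yV: "y \<in> V"
    and e: "E y x" and sy: "s \<in> Ucl V E ID S k y" and py: "p s y \<noteq> Some x"
    and le: "hop_dist V E s x \<le> hop_dist V E s y"
  shows "girth V E \<le> hop_dist V E s x + hop_dist V E s y + 1"
proof -
  have sV: "s \<in> V" using subsetD[OF SV subsetD[OF Ucl_sub sy]] .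
  show ?thesis
  proof (rule part1_core[OF sg conn sV e le])
    show "hop_dist V E s x = hop_dist V E s y \<or>
       (\<exists>w. E y w \<and> w \<noteq> x \<and> hop_dist V E s w + 1 = hop_dist V E s y)"
    proof (cases "hop_dist V E s x = hop_dist V E s y")
      case False
      have "y \<noteq> s"
      proof
        assume "y = s"
        then have "hop_dist V E s y = 0" using hop_self[OF sV] by simp
        then show False using False le by simp
      qed
      then have "\<exists>w. E y w \<and> w \<noteq> x \<and> hop_dist V E s w + 1 = hop_dist V E s y"
        by (rule par_lemma[OF vp yV sy _ py])
      then show ?thesis by (rule disjI2)
    next
      case True
      then show ?thesis by simp
    qed
  qed
qed

lemma part1:
  assumes sg: "simple_graph V E" and conn: "connected_graph V E" and SV: "S \<subseteq> V"
    and vp: "valid_parents V E ID S k p"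
  shows "girth V E \<le> estimate V E ID S k p"
  unfolding estimate_def
proof (rule INF_greatest)
  fix y assume yV: "y \<in> V"
  show "girth V E \<le> M_at V E ID S k p y"
    unfolding M_at_def
  proof (rule Inf_greatest)
    fix z assume "z \<in> {hop_dist V E s x + hop_dist V E s y + 1 | x s.
      E y x \<and> s \<in> Ucl V E ID S k y \<and> s \<in> Ucl V E ID S k x \<and>
      p s x \<noteq> Some y \<and> p s y \<noteq> Some x}"
    then obtain x s where z: "z = hop_dist V E s x + hop_dist V E s y + 1" "E y x"
      "s \<in> Ucl V E ID S k y" "s \<in> Ucl V E ID S k x" "p s x \<noteq> Some y" "p s y \<noteq> Some x"
      by blast
    have xV: "x \<in> V" "E x y" using simple_E[OF sg z(2)] by auto
    show "girth V E \<le> z"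
    proof (cases "hop_dist V E s x \<le> hop_dist V E s y")
      case True
      then show ?thesis using part1_half[OF sg conn SV vp yV z(2,3,6) True] z(1) by simp
    next
      case False
      then have "hop_dist V E s y \<le> hop_dist V E s x" by simp
      from part1_half[OF sg conn SV vp xV(1) xV(2) z(4,5) this]
      show ?thesis using z(1) by (simp add: add.commute add.left_commute)
    qed
  qed
qed


lemma mod_two: "(3::nat) \<le> g \<Longrightarrow> (a + 2) mod g \<noteq> a mod g"
proof
  assume g: "3 \<le> g" and h: "(a + 2) mod g = a mod g"
  define r where "r = a mod g"
  have r: "r < g" using g r_def by simp
  have "(a + 2) mod g = (r + 2) mod g" unfolding r_def by (rule mod_add_left_eq[symmetric])
  with h have e: "(r + 2) mod g = r" unfolding r_def by simp
  show False
  proof (cases "r + 2 < g")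
    case True then show False using e by simp
  next
    case False
    then have "(r + 2) mod g = r + 2 - g" using r g by (simp add: le_mod_geq)
    then show False using e g r False by simp
  qed
qed



lemma parent_some:
  assumes "valid_parents V E ID S k p" "z \<in> V" "s \<in> Ucl V E ID S k z" "p s z = Some w"
  shows "z \<noteq> s \<and> hop_dist V E s w + 1 = hop_dist V E s z"
proof -
  have h: "(z = s \<longrightarrow> p s z = None) \<and> (z \<noteq> s \<longrightarrow> (\<exists>w. p s z = Some w \<and> E z w \<and> hop_dist V E s w + 1 = hop_dist V E s z))"
    using bspec[OF bspec[OF assms(1)[unfolded valid_parents_def] assms(2)] assms(3)] .
  have zs: "z \<noteq> s" using conjunct1[OF h] assms(4) by auto
  then obtain w' where "p s z = Some w'" "hop_dist V E s w' + 1 = hop_dist V E s z"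
    using conjunct2[OF h] by auto
  then show ?thesis using zs assms(4) by simp
qed

lemma cycle_edge:
  assumes "is_cycle V E c" "g = length c"
  shows "E (c ! ((j + t) mod g)) (c ! ((j + Suc t) mod g))"
proof -
  have "3 \<le> length c" using assms(1) unfolding is_cycle_def by simp
  then have g: "g > 0" using assms(2) by linarith
  have "E (c ! ((j + t) mod g)) (c ! (((j + t) mod g + 1) mod g))"
    using assms g unfolding is_cycle_def by simp
  moreover have "((j + t) mod g + 1) mod g = (j + Suc t) mod g" by (simp add: mod_Suc_eq)
  ultimately show ?thesis by simp
qed


lemma part2:
  assumes sg: "simple_graph V E" and conn: "connected_graph V E" and SV: "S \<subseteq> V"
    and vp: "valid_parents V E ID S k p" and ne: "covered_shortest V E ID S k \<noteq> {}"
  shows "estimate V E ID S k p \<le> 2 * dS V E ID S k + girth V E"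
proof -
  let ?CS = "covered_shortest V E ID S k"
  have "dS V E ID S k \<in> dist_S_cycle V E ID S k ` ?CS"
    unfolding dS_def by (rule enat_Inf_in) (use ne in simp)
  then obtain c where c: "c \<in> ?CS" "dS V E ID S k = dist_S_cycle V E ID S k c" by (rule imageE) simp
  have cyc: "is_cycle V E c" and gir: "enat (length c) = girth V E"
    using c(1) unfolding covered_shortest_def shortest_cycle_def by auto
  have "\<exists>s\<in>S. covers V E ID S k s c" using c(1) unfolding covered_shortest_def by simp
  then have "{dist_src_cycle V E s c | s. s \<in> S \<and> covers V E ID S k s c} \<noteq> {}" by auto
  from enat_Inf_in[OF this] obtain s where s: "s \<in> S" "covers V E ID S k s c"
    "dist_S_cycle V E ID S k c = dist_src_cycle V E s c"
    unfolding dist_S_cycle_def by auto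
  define g where "g = length c"
  have g3: "3 \<le> g" using cyc unfolding is_cycle_def g_def by simp
  have cV: "set c \<subseteq> V" using cyc unfolding is_cycle_def by simp
  have dc: "distinct c" using cyc unfolding is_cycle_def by simp
  have sV: "s \<in> V" using s(1) SV by auto
  have cov: "\<And>z. z \<in> set c \<Longrightarrow> s \<in> Ucl V E ID S k z" using s(2) unfolding covers_def by simp
  have "set c \<noteq> {}" using g3 g_def by auto
  then have "(\<lambda>v. hop_dist V E s v) ` set c \<noteq> {}" by simp
  then have "dist_src_cycle V E s c \<in> (\<lambda>v. hop_dist V E s v) ` set c"
    unfolding dist_src_cycle_def by (rule enat_Inf_in)
  then obtain v where v: "v \<in> set c" "dist_src_cycle V E s c = hop_dist V E s v" by (rule imageE) simp
  have vmin: "\<And>z. z \<in> set c \<Longrightarrow> hop_dist V E s v \<le> hop_dist V E s z"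
    using v(2) unfolding dist_src_cycle_def by (metis Inf_lower imageI)
  have "hop_dist V E s v < \<infinity>" using conn sV v(1) cV unfolding connected_graph_def by auto
  then obtain d0 where d0: "hop_dist V E s v = enat d0" by (cases "hop_dist V E s v") auto
  obtain j where j: "j < g" "c ! j = v" using v(1) unfolding g_def by (metis in_set_conv_nth)
  define cc where "cc t = c ! ((j + t) mod g)" for t
  have ccs: "cc t \<in> set c" for t
  proof -
    have "0 < g" using g3 by simp
    then have "(j + t) mod g < g" by (rule mod_less_divisor)
    then have "(j + t) mod g < length c" unfolding g_def .
    then show ?thesis unfolding cc_def by (rule nth_mem)
  qed
  have cce: "E (cc t) (cc (Suc t))" for t unfolding cc_def by (rule cycle_edge[OF cyc g_def])
  have cc0: "cc 0 = v" "cc g = v" unfolding cc_def using j by simp_all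
  have fwd: "hop_dist V E s (cc t) \<le> enat (d0 + t)" for t
  proof (induction t)
    case 0 then show ?case using cc0 d0 by simp
  next
    case (Suc t)
    have "hop_dist V E s (cc (Suc t)) \<le> hop_dist V E s (cc t) + 1" by (rule hop_step[OF sg cce])
    also have "\<dots> \<le> enat (d0 + t) + 1" using Suc.IH by (simp add: add_right_mono)
    finally show ?case by (simp add: one_enat_def)
  qed
  have bwd: "t \<le> g \<Longrightarrow> hop_dist V E s (cc (g - t)) \<le> enat (d0 + t)" for t
  proof (induction t)
    case 0 then show ?case using cc0 d0 by simp
  next
    case (Suc t)
    have "E (cc (g - Suc t)) (cc (Suc (g - Suc t)))" by (rule cce)
    moreover have "Suc (g - Suc t) = g - t" using Suc.prems by simp
    ultimately have e: "E (cc (g - t)) (cc (g - Suc t))" using simple_E[OF sg] by metis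
    have "hop_dist V E s (cc (g - Suc t)) \<le> hop_dist V E s (cc (g - t)) + 1" by (rule hop_step[OF sg e])
    also have "\<dots> \<le> enat (d0 + t) + 1" using Suc by (simp add: add_right_mono)
    finally show ?case by (simp add: one_enat_def)
  qed
  have par: "z \<noteq> s \<and> hop_dist V E s w + 1 = hop_dist V E s z"
    if a: "z \<in> set c" "p s z = Some w" for z w
  proof -
    have "z \<in> V" using a(1) cV by auto
    then show ?thesis by (rule parent_some[OF vp _ cov[OF a(1)] a(2)])
  qed
  have "\<exists>t. p s (cc t) \<noteq> Some (cc (Suc t)) \<and> p s (cc (Suc t)) \<noteq> Some (cc t)"
  proof (rule ccontr)
    assume "\<not> ?thesis"
    then have H: "p s (cc t) = Some (cc (Suc t)) \<or> p s (cc (Suc t)) = Some (cc t)" for t by auto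
    have claim: "1 \<le> t \<Longrightarrow> t \<le> g \<Longrightarrow> p s (cc t) = Some (cc (t - 1)) \<and> hop_dist V E s (cc t) = enat (d0 + t)" for t
    proof (induction t)
      case 0 then show ?case by simp
    next
      case (Suc t)
      show ?case
      proof (cases "t = 0")
        case True
        have "p s (cc 0) \<noteq> Some (cc (Suc 0))"
        proof
          assume "p s (cc 0) = Some (cc (Suc 0))"
          from par[OF ccs this] have "hop_dist V E s (cc 1) + 1 = enat d0" using cc0 d0 by simp
          moreover have "enat d0 \<le> hop_dist V E s (cc 1)" using vmin[OF ccs] d0 by simp
          then have "enat d0 + 1 \<le> hop_dist V E s (cc 1) + 1" by (rule add_right_mono)
          ultimately have "enat d0 + 1 \<le> enat d0" by simp
          then show False by (simp add: one_enat_def)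
        qed
        then have p1: "p s (cc (Suc 0)) = Some (cc 0)" using H[of 0] by simp
        from par[OF ccs p1] have "hop_dist V E s (cc 0) + 1 = hop_dist V E s (cc 1)" by simp
        then show ?thesis using p1 True cc0 d0 by (simp add: one_enat_def)
      next
        case False
        then have IH: "p s (cc t) = Some (cc (t - 1))" "hop_dist V E s (cc t) = enat (d0 + t)"
          using Suc by auto
        have "cc (Suc t) \<noteq> cc (t - 1)"
        proof
          assume "cc (Suc t) = cc (t - 1)"
          then have e1: "c ! ((j + Suc t) mod g) = c ! ((j + (t - 1)) mod g)" unfolding cc_def .
          have "0 < g" using g3 by simp
          then have i1: "(j + Suc t) mod g < length c" and i2: "(j + (t - 1)) mod g < length c"
            unfolding g_def by simp_all
          have "(j + Suc t) mod g = (j + (t - 1)) mod g"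
            using nth_eq_iff_index_eq[OF dc i1 i2] e1 by simp
          moreover have "j + Suc t = (j + (t - 1)) + 2" using False by simp
          ultimately show False using mod_two[OF g3, of "j + (t - 1)"] by simp
        qed
        then have "p s (cc t) \<noteq> Some (cc (Suc t))" using IH(1) by simp
        then have p1: "p s (cc (Suc t)) = Some (cc t)" using H[of t] by simp
        from par[OF ccs p1] have "hop_dist V E s (cc t) + 1 = hop_dist V E s (cc (Suc t))" by simp
        then show ?thesis using p1 IH(2) by (simp add: one_enat_def)
      qed
    qed
    have "hop_dist V E s (cc g) = enat (d0 + g)" using claim[of g] g3 by simp
    then show False using cc0 d0 g3 by simp
  qed
  then obtain t where t: "p s (cc t) \<noteq> Some (cc (Suc t))" "p s (cc (Suc t)) \<noteq> Some (cc t)" by auto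
  define t' where "t' = t mod g"
  have t'1: "t' < g" unfolding t'_def using g3 by simp
  have "(j + t mod g) mod g = (j + t) mod g" by (rule mod_add_right_eq)
  then have t'2: "cc t = cc t'" unfolding t'_def cc_def by simp
  have "(j + Suc (t mod g)) mod g = (Suc j + t mod g) mod g" by simp
  also have "\<dots> = (Suc j + t) mod g" by (rule mod_add_right_eq)
  also have "\<dots> = (j + Suc t) mod g" by simp
  finally have t'3: "cc (Suc t) = cc (Suc t')" unfolding t'_def cc_def by simp
  note t' = t'1 t'2 t'3
  have bx: "hop_dist V E s (cc (Suc t')) \<le> enat (d0 + (g - Suc t'))"
    using bwd[of "g - Suc t'"] t'(1) by (simp add: Suc_diff_Suc)
  have by': "hop_dist V E s (cc t') \<le> enat (d0 + t')" by (rule fwd)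
  let ?y = "cc t" and ?x = "cc (Suc t)"
  have yV: "?y \<in> V" using ccs cV by auto
  have "hop_dist V E s ?x + hop_dist V E s ?y + 1
      \<in> {hop_dist V E s x + hop_dist V E s ?y + 1 | x s.
      E ?y x \<and> s \<in> Ucl V E ID S k ?y \<and> s \<in> Ucl V E ID S k x \<and>
      p s x \<noteq> Some ?y \<and> p s ?y \<noteq> Some x}"
    unfolding mem_Collect_eq
    by (rule exI[of _ ?x], rule exI[of _ s]) (use cce[of t] cov[OF ccs] cov[OF ccs] t in simp)
  then have "M_at V E ID S k p ?y \<le> hop_dist V E s ?x + hop_dist V E s ?y + 1"
    unfolding M_at_def by (rule Inf_lower)
  moreover have "estimate V E ID S k p \<le> M_at V E ID S k p ?y"
    unfolding estimate_def using yV by (rule INF_lower)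
  ultimately have "estimate V E ID S k p \<le> hop_dist V E s ?x + hop_dist V E s ?y + 1" by simp
  also have "\<dots> \<le> enat (d0 + (g - Suc t')) + enat (d0 + t') + 1"
    using bx by' t' by (intro add_mono) simp_all
  also have "\<dots> = enat (2 * d0 + g)" using t'(1) by (simp add: one_enat_def)
  also have "\<dots> = 2 * dS V E ID S k + girth V E"
  proof -
    have "dS V E ID S k = enat d0" using c(2) s(3) v(2) d0 by simp
    moreover have "girth V E = enat g" using gir g_def by simp
    ultimately show ?thesis by (simp add: numeral_eq_enat)
  qed
  finally show ?thesis .
qed


theorem mainTheorem7:
  fixes V :: "'a set" and E :: "'a \<Rightarrow> 'a \<Rightarrow> bool" and ID :: "'a \<Rightarrow> nat"
    and S :: "'a set" and k :: nat and p :: "'a \<Rightarrow> 'a \<Rightarrow> 'a option"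
  assumes "simple_graph V E" and "connected_graph V E" and "inj_on ID V"
    and "S \<subseteq> V" and "valid_parents V E ID S k p"
  shows "girth V E \<le> estimate V E ID S k p \<and>
    (covered_shortest V E ID S k \<noteq> {} \<longrightarrow>
       estimate V E ID S k p \<le> 2 * dS V E ID S k + girth V E)"
  using part1[OF assms(1,2,4,5)] part2[OF assms(1,2,4,5)] by blast

end
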